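(* Let $t=(k_1,\dots,k_l)$ be a parameter tuple of length $l\in\mathbb{N}$, let $m\in\mathbb{N}_0$ and $s\in\mathbb{R}$ with $s>1$. Then $$\mathrm{grt}_{m+l}(\underbrace{2,\dots,2}_{m},k_1,\dots,k_l)\le\max\big(s\cdot m+1,\ \mathrm{cr}_{\mathrm{app}}(t,1-\tfrac1s)\big).$$
   Context: A parameter tuple is a non-decreasing tuple $(k_1,\dots,k_r)$ of integers $k_i\ge2$. An arithmetic progression of size $k$ is a $k$-element set $P\subset\mathbb{N}$ such that, in natural order, consecutive elements always have the same distance. Let $p_1<p_2<\dots$ be the prime numbers. For a parameter tuple $(k_1,\dots,k_r)$, the Green-Tao number $\mathrm{grt}_r(k_1,\dots,k_r)$ is the smallest $n_0\in\mathbb{N}$ such that for every $n\ge n_0$ and every $f:\{p_1,\dots,p_n\}\to\{1,\dots,r\}$ there is $i$ such that $f^{-1}(i)$ contains an arithmetic progression of size $k_i$. For $q>0$, $\mathrm{cr}_{\mathrm{app}}(t,q)\in\mathbb{N}\cup\{+\infty\}$ is the infimum of all $n\in\mathbb{N}$ such that for all $n'\ge n$ and all pairwise disjoint $S_1,\dots,S_l\subseteq\{p_1,\dots,p_{n'}\}$ with $S_i$ containing no arithmetic progression of size $k_i$, we have $\frac{|S_1|+\dots+|S_l|}{n'}<q$ (infimum of the empty set is $+\infty$). *)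

theory Defs
  imports Complex_Main "HOL-Library.Infinite_Set" "HOL-Library.Extended_Real"
    "HOL-Computational_Algebra.Primes"
begin

text \<open>The i-th prime (0-indexed): enumerate of the set of primes, so p_(i+1) = nth_prime i.\<close>
definition nth_prime :: "nat \<Rightarrow> nat" where
  "nth_prime i = enumerate {p::nat. prime p} i"

definition first_primes :: "nat \<Rightarrow> nat set" where
  "first_primes n = nth_prime ` {..<n}"

definition param_tuple :: "nat list \<Rightarrow> bool" where
  "param_tuple ks \<longleftrightarrow> sorted ks \<and> (\<forall>k\<in>set ks. 2 \<le> k)"

definition is_AP :: "nat \<Rightarrow> nat set \<Rightarrow> bool" where
  "is_AP k P \<longleftrightarrow> card P = k \<and> (\<exists>a d. P = {a + i * d | i. i < k})"

definition has_AP :: "nat \<Rightarrow> nat set \<Rightarrow> bool" where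
  "has_AP k S \<longleftrightarrow> (\<exists>P. P \<subseteq> S \<and> is_AP k P)"

text \<open>Green-Tao number of the tuple ks (r = length ks); colours are 1..r and
  colour i must avoid APs of size ks!(i-1). Infimum of the empty set is infinity.\<close>
definition grt :: "nat list \<Rightarrow> enat" where
  "grt ks = (INF n0 \<in> {n0::nat. \<forall>n\<ge>n0. \<forall>f::nat \<Rightarrow> nat.
      f ` first_primes n \<subseteq> {1..length ks} \<longrightarrow>
      (\<exists>i\<in>{1..length ks}. has_AP (ks ! (i - 1)) {p \<in> first_primes n. f p = i})}. enat n0)"

text \<open>cr_app(t,q), with S_1..S_l represented as S 0, ..., S (l-1).\<close>
definition cr_app :: "nat list \<Rightarrow> real \<Rightarrow> enat" where
  "cr_app ks q = (INF n \<in> {n::nat. 1 \<le> n \<and> (\<forall>n'\<ge>n. \<forall>S::nat \<Rightarrow> nat set.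
      ((\<forall>i<length ks. S i \<subseteq> first_primes n' \<and> \<not> has_AP (ks ! i) (S i)) \<and>
       (\<forall>i<length ks. \<forall>j<length ks. i \<noteq> j \<longrightarrow> S i \<inter> S j = {}))
      \<longrightarrow> real (\<Sum>i<length ks. card (S i)) / real n' < q)}. enat n)"

end

theory Submission
  imports Defs
begin

lemma card_first_primes: "card (first_primes n) = n"
proof -
  have "strict_mono (enumerate {p::nat. prime p})"
    using strict_mono_enumerate primes_infinite by blast
  hence "inj nth_prime" unfolding nth_prime_def[abs_def] using strict_mono_imp_inj_on by blast
  thus ?thesis unfolding first_primes_def by (simp add: card_image inj_on_subset)
qed

lemma noAP2: assumes "\<not> has_AP 2 A" "finite A" shows "card A \<le> 1"
proof (rule ccontr)
  assume "\<not> card A \<le> 1"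
  then obtain a0 b0 where ab0: "a0 \<in> A" "b0 \<in> A" "a0 \<noteq> b0"
    using card_le_Suc0_iff_eq[OF assms(2)] by auto
  define a where "a = min a0 b0"
  define b where "b = max a0 b0"
  have ab: "a \<in> A" "b \<in> A" and lt: "a < b" using ab0 unfolding a_def b_def by (auto simp: min_def max_def)
  have e1: "{a + i * (b - a) | i. i < (2::nat)} = (\<lambda>i. a + i * (b - a)) ` {..<2}" by blast
  have e2: "{..<2::nat} = {0, 1}" by auto
  have eq: "{a + i * (b - a) | i. i < (2::nat)} = {a, b}" unfolding e1 e2 using lt by simp
  have "is_AP 2 {a,b}" unfolding is_AP_def
  proof (intro conjI)
    show "card {a, b} = 2" using lt by simp
    show "\<exists>a' d. {a, b} = {a' + i * d | i. i < 2}" using eq by metis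
  qed
  moreover have "{a,b} \<subseteq> A" using ab by simp
  ultimately show False using assms(1) unfolding has_AP_def by blast
qed

theorem corollary2:
  fixes ks :: "nat list" and m :: nat and s :: real
  assumes "param_tuple ks" and "length ks \<ge> 1" and "s > 1"
  shows "ereal_of_enat (grt (replicate m 2 @ ks))
           \<le> max (ereal (s * real m + 1)) (ereal_of_enat (cr_app ks (1 - 1 / s)))"
proof -
  define A where "A = {n::nat. 1 \<le> n \<and> (\<forall>n'\<ge>n. \<forall>S::nat \<Rightarrow> nat set.
      ((\<forall>i<length ks. S i \<subseteq> first_primes n' \<and> \<not> has_AP (ks ! i) (S i)) \<and>
       (\<forall>i<length ks. \<forall>j<length ks. i \<noteq> j \<longrightarrow> S i \<inter> S j = {}))
      \<longrightarrow> real (\<Sum>i<length ks. card (S i)) / real n' < 1 - 1/s)}"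
  have cr: "cr_app ks (1 - 1/s) = (INF n \<in> A. enat n)" unfolding cr_app_def A_def ..
  show ?thesis
  proof (cases "A = {}")
    case True
    thus ?thesis using cr by (simp add: top_enat_def)
  next
    case False
    define N where "N = (LEAST n. n \<in> A)"
    have NA: "N \<in> A" using False N_def by (metis LeastI ex_in_conv)
    have crge: "enat N \<le> cr_app ks (1 - 1/s)" unfolding cr
      by (rule INF_greatest) (simp add: N_def Least_le)
    define n0 where "n0 = max N (nat \<lceil>s * real m\<rceil>)"
    let ?ks = "replicate m 2 @ ks"
    have good: "\<forall>n\<ge>n0. \<forall>f::nat \<Rightarrow> nat.
      f ` first_primes n \<subseteq> {1..length ?ks} \<longrightarrow>
      (\<exists>i\<in>{1..length ?ks}. has_AP (?ks ! (i - 1)) {p \<in> first_primes n. f p = i})"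
    proof (intro allI impI, rule ccontr)
      fix n f
      assume n: "n0 \<le> n" and fim: "f ` first_primes n \<subseteq> {1..length ?ks}"
        and no: "\<not> (\<exists>i\<in>{1..length ?ks}. has_AP (?ks ! (i - 1)) {p \<in> first_primes n. f p = i})"
      let ?l = "length ks"
      define S where "S j = {p \<in> first_primes n. f p = m + 1 + j}" for j
      have fin: "finite (first_primes n)" unfolding first_primes_def by simp
      have Nn: "N \<le> n" using n n0_def by simp
      have Sprop: "(\<forall>i<?l. S i \<subseteq> first_primes n \<and> \<not> has_AP (ks ! i) (S i)) \<and>
       (\<forall>i<?l. \<forall>j<?l. i \<noteq> j \<longrightarrow> S i \<inter> S j = {})"
      proof (intro conjI allI impI)
        fix i assume i: "i < ?l"
        show "S i \<subseteq> first_primes n" unfolding S_def by auto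
        have "m + 1 + i \<in> {1..length ?ks}" using i by simp
        moreover have "?ks ! (m + 1 + i - 1) = ks ! i" by (simp add: nth_append)
        ultimately show "\<not> has_AP (ks ! i) (S i)" using no unfolding S_def by metis
      next
        fix i j :: nat assume "i \<noteq> j" thus "S i \<inter> S j = {}" unfolding S_def by auto
      qed
      have lt: "real (\<Sum>i<?l. card (S i)) / real n < 1 - 1/s"
        using NA Nn Sprop unfolding A_def by blast
      define C0 where "C0 = {p \<in> first_primes n. f p \<in> {1..m}}"
      have C0: "C0 = (\<Union>i\<in>{1..m}. {p \<in> first_primes n. f p = i})" unfolding C0_def by auto
      have "card C0 \<le> (\<Sum>i\<in>{1..m}. card {p \<in> first_primes n. f p = i})"
        unfolding C0 by (rule card_UN_le) simp
      also have "\<dots> \<le> (\<Sum>i\<in>{1..m}. 1)"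
      proof (rule sum_mono)
        fix i assume i: "i \<in> {1..m}"
        hence "i \<in> {1..length ?ks}" by simp
        moreover have "i - 1 < m" using i by auto
        hence "?ks ! (i - 1) = 2" by (simp add: nth_append)
        ultimately have "\<not> has_AP 2 {p \<in> first_primes n. f p = i}" using no by metis
        thus "card {p \<in> first_primes n. f p = i} \<le> 1" by (rule noAP2) (simp add: fin)
      qed
      finally have c0: "card C0 \<le> m" by simp
      have split: "first_primes n = C0 \<union> (\<Union>j<?l. S j)"
      proof
        show "first_primes n \<subseteq> C0 \<union> (\<Union>j<?l. S j)"
        proof
          fix p assume p: "p \<in> first_primes n"
          hence fp: "f p \<in> {1..m + ?l}" using fim by auto
          show "p \<in> C0 \<union> (\<Union>j<?l. S j)"
          proof (cases "f p \<le> m")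
            case True thus ?thesis using p fp unfolding C0_def by auto
          next
            case False
            hence "f p - m - 1 < ?l" "f p = m + 1 + (f p - m - 1)" using fp by auto
            thus ?thesis using p unfolding S_def by blast
          qed
        qed
      qed (auto simp: C0_def S_def)
      have disj: "C0 \<inter> (\<Union>j<?l. S j) = {}" unfolding C0_def S_def by auto
      have "n = card C0 + card (\<Union>j<?l. S j)"
        using card_first_primes[of n] split disj fin
        by (metis card_Un_disjoint finite_Un)
      also have "card (\<Union>j<?l. S j) = (\<Sum>j<?l. card (S j))"
        by (rule card_UN_disjoint) (auto simp: S_def fin)
      finally have "real (\<Sum>j<?l. card (S j)) \<ge> real n - real m" using c0 by linarith
      moreover have n1: "real n \<ge> 1" using NA Nn unfolding A_def by simp
      moreover have "real n \<ge> s * real m" using n unfolding n0_def by linarith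
      ultimately have "real (\<Sum>j<?l. card (S j)) \<ge> real n * (1 - 1/s)"
      proof -
        fix T :: real
        have key: "\<And>T::real. real n - real m \<le> T \<Longrightarrow> real n \<ge> s * real m \<Longrightarrow> T \<ge> real n * (1 - 1/s)"
        proof -
          fix T :: real assume h1: "real n - real m \<le> T" and h2: "real n \<ge> s * real m"
          have "real m \<le> real n / s" using h2 assms(3) by (simp add: field_simps)
          hence "real n * (1 - 1/s) \<le> real n - real m" by (simp add: field_simps)
          thus "T \<ge> real n * (1 - 1/s)" using h1 by linarith
        qed
        assume "real (\<Sum>j<?l. card (S j)) \<ge> real n - real m" "real n \<ge> 1" "real n \<ge> s * real m"
        thus ?thesis using key by blast
      qed
      hence "real (\<Sum>j<?l. card (S j)) / real n \<ge> 1 - 1/s" using n1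
        by (simp add: field_simps)
      thus False using lt by simp
    qed
    have "grt ?ks \<le> enat n0" unfolding grt_def by (rule INF_lower) (use good in simp)
    hence "ereal_of_enat (grt ?ks) \<le> ereal (real n0)"
      by (metis ereal_of_enat_le_iff ereal_of_enat_simps(1))
    also have "ereal (real n0) \<le> max (ereal (s * real m + 1)) (ereal (real N))"
    proof -
      have c: "\<lceil>s * real m\<rceil> \<ge> 0" proof - have "0 \<le> s * real m" using assms(3) by simp thus ?thesis by simp qed
      have "real (nat \<lceil>s * real m\<rceil>) = of_int \<lceil>s * real m\<rceil>" using c by simp
      also have "\<dots> \<le> s * real m + 1" by linarith
      finally have "real n0 \<le> max (s * real m + 1) (real N)" unfolding n0_def by simp
      hence "real n0 \<le> s * real m + 1 \<or> real n0 \<le> real N" by (simp add: le_max_iff_disj)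
      thus ?thesis
      proof
        assume "real n0 \<le> s * real m + 1"
        hence "ereal (real n0) \<le> ereal (s * real m + 1)" by (simp only: ereal_less_eq(3))
        thus ?thesis by (rule max.coboundedI1)
      next
        assume "real n0 \<le> real N"
        hence "ereal (real n0) \<le> ereal (real N)" by (simp only: ereal_less_eq(3))
        thus ?thesis by (rule max.coboundedI2)
      qed
    qed
    also have "\<dots> \<le> max (ereal (s * real m + 1)) (ereal_of_enat (cr_app ks (1 - 1 / s)))"
    proof -
      have "ereal (real N) = ereal_of_enat (enat N)" by simp
      also have "\<dots> \<le> ereal_of_enat (cr_app ks (1 - 1 / s))" using crge by (simp only: ereal_of_enat_le_iff)
      finally show ?thesis by (rule max.mono[OF order_refl])
    qed
    finally show ?thesis .
  qed
qed

end
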